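(* For any input distribution $\mathcal{D}$ and any $n,k\ge1$, $p\in[0,1]$, there exists a deterministic algorithm (which may depend on $\mathcal{D}$) for searching an element $z$, sampled from $\mathcal{D}$, in an unsorted list of length $n$, that runs in $k$ rounds, has success probability at least $p$, and issues at most $np\bigl(1-\frac{k-1}{2k}p\bigr)+1$ comparisons in expectation.
   Context: Unordered search in the comparison model: an array $\vec{x}=(x_1,\ldots,x_n)$ of distinct elements in no particular order and a target $z$ equal to exactly one entry $x_\ell$; $\mathcal{D}$ is a probability distribution over which entry $z$ is. Queries ask "How is $a$ compared to $b$?" for $a,b\in\{x_1,\ldots,x_n,z\}$, with answer "$<$", "$=$" or "$>$"; the goal is to output $\ell$. An algorithm runs in $k$ rounds if in each of $k$ rounds it submits a set of queries chosen depending only on answers of earlier rounds, then receives all answers. *)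

theory Defs
  imports "HOL-Probability.Probability"
begin

text \<open>Unordered search in the comparison model.
  Entries are indexed 0..n-1 (the paper uses 1..n). An item is either the
  target z or an array entry x_i.\<close>

datatype item = Zt | Xt nat

datatype cmp = Lt | Eq | Gt

type_synonym query = "item \<times> item"

type_synonym hist = "query \<Rightarrow> cmp option"

definition item_ok :: "nat \<Rightarrow> item \<Rightarrow> bool" where
  "item_ok n a = (case a of Zt \<Rightarrow> True | Xt i \<Rightarrow> i < n)"

definition valid_queries :: "nat \<Rightarrow> query set" where
  "valid_queries n = {(a, b). item_ok n a \<and> item_ok n b}"

fun val :: "(nat \<Rightarrow> 'a) \<Rightarrow> 'a \<Rightarrow> item \<Rightarrow> 'a" where
  "val x z Zt = z"
| "val x z (Xt i) = x i"

definition compare :: "'a::linorder \<Rightarrow> 'a \<Rightarrow> cmp" where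
  "compare u v = (if u < v then Lt else if u = v then Eq else Gt)"

definition answer :: "(nat \<Rightarrow> 'a::linorder) \<Rightarrow> 'a \<Rightarrow> query \<Rightarrow> cmp" where
  "answer x z q = compare (val x z (fst q)) (val x z (snd q))"

text \<open>A deterministic round-based algorithm is given by a query function
  Q r h : the set of queries submitted in round r, depending only on the answers h
  received in earlier rounds; and an alg_output function applied after the last round.\<close>

fun run :: "(nat \<Rightarrow> hist \<Rightarrow> query set) \<Rightarrow> (nat \<Rightarrow> 'a::linorder) \<Rightarrow> 'a \<Rightarrow> nat \<Rightarrow> hist" where
  "run Q x z 0 = Map.empty"
| "run Q x z (Suc r) =
     (let h = run Q x z r
      in h ++ (\<lambda>q. if q \<in> Q r h then Some (answer x z q) else None))"

fun cost :: "(nat \<Rightarrow> hist \<Rightarrow> query set) \<Rightarrow> (nat \<Rightarrow> 'a::linorder) \<Rightarrow> 'a \<Rightarrow> nat \<Rightarrow> nat" where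
  "cost Q x z 0 = 0"
| "cost Q x z (Suc r) = cost Q x z r + card (Q r (run Q x z r))"

definition wf_alg :: "nat \<Rightarrow> (nat \<Rightarrow> hist \<Rightarrow> query set) \<Rightarrow> bool" where
  "wf_alg n Q = (\<forall>r h. Q r h \<subseteq> valid_queries n)"

definition alg_output :: "(nat \<Rightarrow> hist \<Rightarrow> query set) \<Rightarrow> (hist \<Rightarrow> nat) \<Rightarrow> nat
    \<Rightarrow> (nat \<Rightarrow> 'a::linorder) \<Rightarrow> 'a \<Rightarrow> nat" where
  "alg_output Q out k x z = out (run Q x z k)"

end

theory Submission
  imports Defs
begin

lemma run_Some:
  "run Q x z r q = Some c \<Longrightarrow> c = answer x z q"
  by (induction r arbitrary: c) (auto simp: Let_def map_add_Some_iff split: if_splits)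

lemma run_valid:
  "wf_alg n Q \<Longrightarrow> run Q x z r q = Some c \<Longrightarrow> q \<in> valid_queries n"
  by (induction r arbitrary: c) (auto simp: wf_alg_def Let_def map_add_Some_iff split: if_splits)

definition found :: "hist \<Rightarrow> bool" where
  "found h = (\<exists>i. h (Zt, Xt i) = Some Eq)"

lemma found_step:
  "found (run Q x z (Suc r)) \<longleftrightarrow> found (run Q x z r) \<or>
     (\<exists>i. (Zt, Xt i) \<in> Q r (run Q x z r) \<and> answer x z (Zt, Xt i) = Eq)"
proof -
  let ?h = "run Q x z r"
  show ?thesis
  proof
    assume "found (run Q x z (Suc r))"
    then obtain i where "run Q x z (Suc r) (Zt, Xt i) = Some Eq" by (auto simp: found_def)
    then show "found ?h \<or> (\<exists>i. (Zt, Xt i) \<in> Q r ?h \<and> answer x z (Zt, Xt i) = Eq)"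
      by (auto simp: found_def Let_def map_add_Some_iff split: if_splits)
  next
    assume "found ?h \<or> (\<exists>i. (Zt, Xt i) \<in> Q r ?h \<and> answer x z (Zt, Xt i) = Eq)"
    then show "found (run Q x z (Suc r))"
    proof
      assume "found ?h"
      then obtain i where i: "?h (Zt, Xt i) = Some Eq" by (auto simp: found_def)
      then have "answer x z (Zt, Xt i) = Eq" using run_Some by metis
      then show ?thesis using i unfolding found_def
        by (intro exI[of _ i]) (auto simp: Let_def map_add_Some_iff)
    next
      assume "\<exists>i. (Zt, Xt i) \<in> Q r ?h \<and> answer x z (Zt, Xt i) = Eq"
      then obtain i where "(Zt, Xt i) \<in> Q r ?h" "answer x z (Zt, Xt i) = Eq" by blast
      then show ?thesis unfolding found_def
        by (intro exI[of _ i]) (auto simp: Let_def map_add_Some_iff)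
    qed
  qed
qed

lemma prefix_mass:
  fixes w :: "nat \<Rightarrow> real"
  assumes mono: "\<And>i j. i \<le> j \<Longrightarrow> j < n \<Longrightarrow> w j \<le> w i" and "a \<le> n"
  shows "real a * (\<Sum>t<n. w t) \<le> real n * (\<Sum>t<a. w t)"
proof (cases "a = n")
  case True then show ?thesis by simp
next
  case False
  then have an: "a < n" using assms by simp
  have s1: "(\<Sum>t<a. w t) \<ge> real a * w a"
    using sum_bounded_below[of "{..<a}" "w a" w] mono an by auto
  have s2: "(\<Sum>t\<in>{a..<n}. w t) \<le> real (n - a) * w a"
    using sum_bounded_above[of "{a..<n}" w "w a"] mono an by auto
  have split: "(\<Sum>t<n. w t) = (\<Sum>t<a. w t) + (\<Sum>t\<in>{a..<n}. w t)"
    using an by (metis atLeast0LessThan less_imp_le_nat sum.atLeastLessThan_concat zero_le)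
  have "real a * (\<Sum>t<n. w t) = real a * (\<Sum>t<a. w t) + real a * (\<Sum>t\<in>{a..<n}. w t)"
    by (simp add: split distrib_left)
  also have "\<dots> \<le> real a * (\<Sum>t<a. w t) + real a * (real (n - a) * w a)"
    using s2 by (simp add: mult_left_mono)
  also have "\<dots> \<le> real a * (\<Sum>t<a. w t) + real (n - a) * (\<Sum>t<a. w t)"
    using mult_left_mono[OF s1, of "real (n - a)"] by (simp add: algebra_simps)
  also have "\<dots> = real n * (\<Sum>t<a. w t)" using an by (simp add: of_nat_diff algebra_simps)
  finally show ?thesis .
qed


definition chunk :: "nat list \<Rightarrow> nat \<Rightarrow> nat \<Rightarrow> query set" where
  "chunk xs a b = (\<lambda>t. (Zt, Xt (xs!t))) ` {a..<min b (length xs)}"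

definition QQ :: "nat list \<Rightarrow> (nat \<Rightarrow> nat) \<Rightarrow> nat \<Rightarrow> hist \<Rightarrow> query set" where
  "QQ xs a r h = (if found h then {} else chunk xs (a r) (a (Suc r)))"

definition OUT :: "hist \<Rightarrow> nat" where
  "OUT h = (SOME i. h (Zt, Xt i) = Some Eq)"

lemma answer_Eq: "answer x z (Zt, Xt i) = Eq \<longleftrightarrow> z = x i"
  by (auto simp: answer_def compare_def)

lemma card_chunk:
  assumes "distinct xs" "b \<le> length xs"
  shows "card (chunk xs a b) = b - a"
proof -
  have "inj_on (\<lambda>t. (Zt, Xt (xs!t))) {a..<min b (length xs)}"
    using assms by (auto simp: inj_on_def nth_eq_iff_index_eq)
  then show ?thesis using assms unfolding chunk_def by (simp add: card_image min_absorb1)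
qed

lemma chunk_hit:
  assumes dist: "distinct xs" and len: "length xs = n" and setx: "set xs = {..<n}"
    and inj: "inj_on x {..<n}" and t: "t < n"
  shows "(\<exists>i. (Zt, Xt i) \<in> chunk xs a b \<and> answer x (x (xs!t)) (Zt, Xt i) = Eq)
         \<longleftrightarrow> a \<le> t \<and> t < b"
proof
  assume "\<exists>i. (Zt, Xt i) \<in> chunk xs a b \<and> answer x (x (xs!t)) (Zt, Xt i) = Eq"
  then obtain s where s: "a \<le> s" "s < b" "s < n" "x (xs!t) = x (xs!s)"
    by (auto simp: chunk_def answer_Eq len)
  have "xs!t \<in> {..<n}" "xs!s \<in> {..<n}" using t s(3) len setx nth_mem by (metis)+
  then have "xs!t = xs!s" using inj s(4) by (auto dest: inj_onD)
  then have "t = s" using dist t s(3) len by (simp add: nth_eq_iff_index_eq)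
  then show "a \<le> t \<and> t < b" using s by simp
next
  assume "a \<le> t \<and> t < b"
  then show "\<exists>i. (Zt, Xt i) \<in> chunk xs a b \<and> answer x (x (xs!t)) (Zt, Xt i) = Eq"
    using t len by (intro exI[of _ "xs!t"]) (auto simp: chunk_def answer_Eq)
qed

lemma invariant:
  assumes dist: "distinct xs" and len: "length xs = n" and setx: "set xs = {..<n}"
    and inj: "inj_on x {..<n}" and t: "t < n"
    and a0: "a 0 = 0" and amono: "mono a" and ak: "a k \<le> n"
    and abnd: "\<And>r. real (a r) \<le> C * real r + 1" and C: "C \<ge> 0"
  shows "r \<le> k \<Longrightarrow>
    (found (run (QQ xs a) x (x (xs!t)) r) \<longleftrightarrow> t < a r) \<and>
    (a r \<le> t \<longrightarrow> cost (QQ xs a) x (x (xs!t)) r = a r \<and>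
        (\<Sum>j<r. if a j \<le> t then 1 else 0::real) = real r) \<and>
    real (cost (QQ xs a) x (x (xs!t)) r) \<le> 1 + C * (\<Sum>j<r. if a j \<le> t then 1 else 0)"
proof (induction r)
  case 0
  then show ?case by (simp add: found_def a0)
next
  case (Suc r)
  let ?Q = "QQ xs a" and ?z = "x (xs!t)"
  let ?h = "run ?Q x ?z r"
  let ?c = "\<lambda>r. (\<Sum>j<r. if a j \<le> t then 1 else 0::real)"
  from Suc have IH: "(found ?h \<longleftrightarrow> t < a r)"
    "a r \<le> t \<longrightarrow> cost ?Q x ?z r = a r \<and> ?c r = real r"
    "real (cost ?Q x ?z r) \<le> 1 + C * ?c r" by auto
  have aS: "a (Suc r) \<le> n" using Suc.prems ak amono by (meson monoD order_trans)
  have mon: "a r \<le> a (Suc r)" using amono by (simp add: monoD)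
  have F: "found (run ?Q x ?z (Suc r)) \<longleftrightarrow> t < a (Suc r)"
  proof (cases "t < a r")
    case True
    then show ?thesis using found_step[of ?Q x ?z r] IH(1) mon by auto
  next
    case False
    then have "?Q r ?h = chunk xs (a r) (a (Suc r))" using IH(1) by (simp add: QQ_def)
    then show ?thesis using found_step[of ?Q x ?z r] IH(1) False
        chunk_hit[OF dist len setx inj t, of "a r" "a (Suc r)"] by auto
  qed
  have cardQ: "card (?Q r ?h) = (if t < a r then 0 else a (Suc r) - a r)"
    using IH(1) card_chunk[OF dist, of "a (Suc r)" "a r"] aS len by (simp add: QQ_def)
  have costS: "cost ?Q x ?z (Suc r) = cost ?Q x ?z r + (if t < a r then 0 else a (Suc r) - a r)"
    using cardQ by simp
  have cS: "?c (Suc r) = ?c r + (if a r \<le> t then 1 else 0)" by simp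
  show ?case
  proof (cases "t < a r")
    case True
    then have "\<not> a (Suc r) \<le> t" using mon by simp
    moreover have "real (cost ?Q x ?z (Suc r)) \<le> 1 + C * ?c (Suc r)"
    proof -
      have "?c r \<le> ?c (Suc r)" using cS by simp
      then have "C * ?c r \<le> C * ?c (Suc r)" using C by (simp add: mult_left_mono)
      then show ?thesis using costS True IH(3) by simp
    qed
    ultimately show ?thesis using F by simp
  next
    case False
    then have ar: "a r \<le> t" by simp
    then have cr: "cost ?Q x ?z r = a r" "?c r = real r" using IH(2) by auto
    have cost1: "cost ?Q x ?z (Suc r) = a (Suc r)" using costS cr False mon by simp
    have c1: "?c (Suc r) = real (Suc r)" using cS cr ar by simp
    show ?thesis using F cost1 c1 abnd[of "Suc r"] by (simp add: algebra_simps)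
  qed
qed


lemma output_ok:
  assumes "wf_alg n Q" "inj_on x {..<n}" "l < n" "found (run Q x (x l) k)"
  shows "OUT (run Q x (x l) k) = l"
proof -
  let ?h = "run Q x (x l) k"
  have ex: "\<exists>i. ?h (Zt, Xt i) = Some Eq" using assms(4) by (simp add: found_def)
  define i where "i = OUT ?h"
  have hi: "?h (Zt, Xt i) = Some Eq" unfolding i_def OUT_def using someI_ex[OF ex] .
  have "i < n" using run_valid[OF assms(1) hi] by (simp add: valid_queries_def item_ok_def)
  moreover have "x l = x i" using run_Some[OF hi] by (metis answer_Eq)
  ultimately show ?thesis using assms(2,3) unfolding i_def[symmetric] by (auto dest: inj_onD)
qed

lemma wf_QQ:
  assumes "set xs = {..<n}"
  shows "wf_alg n (QQ xs a)"
  unfolding wf_alg_def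
proof (intro allI subsetI)
  fix r h q assume "q \<in> QQ xs a r h"
  then obtain t where "t < length xs" "q = (Zt, Xt (xs!t))"
    by (auto simp: QQ_def chunk_def split: if_splits)
  moreover have "xs!t < n" using calculation(1) assms nth_mem by (metis lessThan_iff)
  ultimately show "q \<in> valid_queries n" by (simp add: valid_queries_def item_ok_def)
qed

lemma gauss_real: "(\<Sum>j<k. real j) = real k * (real k - 1) / 2"
  by (induction k) (auto simp: algebra_simps)

lemma sum_tail:
  fixes w :: "nat \<Rightarrow> real"
  assumes "b \<le> n"
  shows "(\<Sum>t<n. if b \<le> t then w t else 0) = (\<Sum>t<n. w t) - (\<Sum>t<b. w t)"
proof -
  have "(\<Sum>t<n. w t) = (\<Sum>t<n. (if b \<le> t then w t else 0) + (if t < b then w t else 0))"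
    by (rule sum.cong) auto
  also have "\<dots> = (\<Sum>t<n. if b \<le> t then w t else 0) + (\<Sum>t<n. if t < b then w t else 0)"
    by (simp add: sum.distrib)
  also have "(\<Sum>t<n. if t < b then w t else 0) = (\<Sum>t<b. w t)"
  proof -
    have "(\<Sum>t<n. if t < b then w t else 0) = sum w {t\<in>{..<n}. t < b}"
      by (rule sum.inter_filter[symmetric]) simp
    also have "{t\<in>{..<n}. t < b} = {..<b}" using assms by auto
    finally show ?thesis .
  qed
  finally show ?thesis by simp
qed


theorem proposition11:
  fixes D :: "nat pmf" and n k :: nat and p :: real
  assumes "set_pmf D \<subseteq> {..<n}"
    and "n \<ge> 1" and "k \<ge> 1"
    and "0 \<le> p" and "p \<le> 1"
  shows "\<exists>(Q :: nat \<Rightarrow> hist \<Rightarrow> query set) (out :: hist \<Rightarrow> nat).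
           wf_alg n Q \<and>
           (\<forall>x :: nat \<Rightarrow> 'a::linorder. inj_on x {..<n} \<longrightarrow>
              measure_pmf.prob D {l. alg_output Q out k x (x l) = l} \<ge> p \<and>
              measure_pmf.expectation D (\<lambda>l. real (cost Q x (x l) k))
                \<le> real n * p * (1 - (real k - 1) / (2 * real k) * p) + 1)"
proof -
  note supp = assms(1)
  have n0: "real n > 0" "real k > 0" using assms by auto
  define xs where "xs = sort_key (\<lambda>i. - pmf D i) [0..<n]"
  have dist: "distinct xs" and len: "length xs = n" and setx: "set xs = {..<n}"
    by (auto simp: xs_def)
  define w where "w t = pmf D (xs!t)" for t
  have wmono: "w j \<le> w i" if "i \<le> j" "j < n" for i j
  proof -
    have "sorted (map (\<lambda>i. - pmf D i) xs)" by (simp add: xs_def)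
    from sorted_nth_mono[OF this, of i j] that len show ?thesis by (simp add: w_def)
  qed
  have img: "nth xs ` {..<n} = {..<n}" using len setx
    by (metis atLeast_upt image_set map_nth)
  have injx: "inj_on (nth xs) {..<m}" if "m \<le> n" for m
    using inj_on_nth[OF dist] that len by auto
  have sumW: "(\<Sum>t<n. w t) = 1"
  proof -
    have "(\<Sum>t<n. w t) = sum (pmf D) (nth xs ` {..<n})"
      using sum.reindex[OF injx[of n], of "pmf D"] by (simp add: w_def comp_def)
    also have "\<dots> = 1" using img sum_pmf_eq_1[OF _ supp] by simp
    finally show ?thesis .
  qed
  have pref: "real m / real n \<le> (\<Sum>t<m. w t)" if "m \<le> n" for m
    using prefix_mass[of n w m, OF wmono that] sumW n0 by (simp add: field_simps)
  define C where "C = p * real n / real k"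
  have C0: "C \<ge> 0" using assms by (simp add: C_def)
  define a where "a r = nat \<lceil>real r * p * real n / real k\<rceil>" for r
  have a_lo: "real r * p * real n / real k \<le> real (a r)" for r
    unfolding a_def by linarith
  have a_hi: "real (a r) \<le> C * real r + 1" for r
  proof -
    have "real r * p * real n / real k \<ge> 0" using assms by simp
    then show ?thesis unfolding a_def C_def by (simp add: field_simps) linarith
  qed
  have a0: "a 0 = 0" by (simp add: a_def)
  have amono: "mono a"
  proof (rule monoI)
    fix i j :: nat assume "i \<le> j"
    then have "real i * p * real n / real k \<le> real j * p * real n / real k"
      using assms by (intro divide_right_mono mult_right_mono) auto
    then show "a i \<le> a j" unfolding a_def by (intro nat_mono ceiling_mono)
  qed
  have ak_eq: "a k = nat \<lceil>p * real n\<rceil>" using n0 by (simp add: a_def)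
  have ak: "a k \<le> n"
  proof -
    have "p * real n \<le> real n" using assms by (simp add: mult_left_le_one_le)
    then show ?thesis unfolding ak_eq by (simp add: ceiling_le_iff nat_le_iff) 
  qed
  have ak_lo: "p * real n \<le> real (a k)" using a_lo[of k] n0 by simp
  define Q where "Q = QQ xs a"
  have wf: "wf_alg n Q" unfolding Q_def by (rule wf_QQ[OF setx])
  show ?thesis
  proof (intro exI conjI allI impI)
    show "wf_alg n Q" by (rule wf)
  next
    fix x :: "nat \<Rightarrow> 'a::linorder" assume inj: "inj_on x {..<n}"
    define c where "c t = (\<Sum>j<k. if a j \<le> t then 1 else 0::real)" for t
    have inv: "(found (run Q x (x (xs!t)) k) \<longleftrightarrow> t < a k) \<and>
        real (cost Q x (x (xs!t)) k) \<le> 1 + C * c t" if "t < n" for t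
      using invariant[OF dist len setx inj that a0 amono ak a_hi C0, of k]
      unfolding Q_def c_def by simp
    show "measure_pmf.prob D {l. alg_output Q OUT k x (x l) = l} \<ge> p"
    proof -
      have sub: "nth xs ` {..<a k} \<subseteq> {l. alg_output Q OUT k x (x l) = l}"
      proof
        fix l assume "l \<in> nth xs ` {..<a k}"
        then obtain t where t: "t < a k" "l = xs!t" by auto
        then have tn: "t < n" using ak by simp
        have "l < n" using t tn len setx nth_mem by (metis lessThan_iff)
        then show "l \<in> {l. alg_output Q OUT k x (x l) = l}"
          using output_ok[OF wf inj] inv[OF tn] t by (simp add: alg_output_def)
      qed
      have "measure_pmf.prob D (nth xs ` {..<a k}) = sum (pmf D) (nth xs ` {..<a k})"
        by (simp add: measure_measure_pmf_finite)
      also have "\<dots> = (\<Sum>t<a k. w t)"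
        using sum.reindex[OF injx[OF ak], of "pmf D"] by (simp add: w_def comp_def)
      also have "\<dots> \<ge> real (a k) / real n" using pref[OF ak] .
      finally have "measure_pmf.prob D (nth xs ` {..<a k}) \<ge> real (a k) / real n" .
      moreover have "real (a k) / real n \<ge> p" using ak_lo n0 by (simp add: field_simps)
      moreover have "measure_pmf.prob D (nth xs ` {..<a k}) \<le>
          measure_pmf.prob D {l. alg_output Q OUT k x (x l) = l}"
        using sub by (intro measure_pmf.finite_measure_mono) auto
      ultimately show ?thesis by linarith
    qed
    show "measure_pmf.expectation D (\<lambda>l. real (cost Q x (x l) k))
            \<le> real n * p * (1 - (real k - 1) / (2 * real k) * p) + 1"
    proof -
      let ?f = "\<lambda>l. real (cost Q x (x l) k)"
      have "measure_pmf.expectation D ?f = (\<Sum>l\<in>{..<n}. ?f l * pmf D l)"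
        by (rule integral_measure_pmf_real) (use supp in auto)
      also have "\<dots> = (\<Sum>t<n. ?f (xs!t) * w t)"
        using sum.reindex[OF injx[of n], of "\<lambda>l. ?f l * pmf D l"] img by (simp add: w_def comp_def)
      also have "\<dots> \<le> (\<Sum>t<n. (1 + C * c t) * w t)"
        using inv by (intro sum_mono mult_right_mono) (auto simp: w_def)
      also have "\<dots> = (\<Sum>t<n. w t) + C * (\<Sum>j<k. \<Sum>t<n. if a j \<le> t then w t else 0)"
        unfolding c_def by (simp add: algebra_simps sum.distrib sum_distrib_left
            sum_distrib_right sum.swap[of _ "{..<k}"] if_distrib cong: if_cong)
      also have "\<dots> \<le> 1 + C * (\<Sum>j<k. 1 - real j * p / real k)"
      proof -
        have "(\<Sum>t<n. if a j \<le> t then w t else 0) \<le> 1 - real j * p / real k" if "j < k" for j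
        proof -
          have ajn: "a j \<le> n" using amono ak that by (meson monoD less_imp_le order_trans)
          have "(\<Sum>t<n. if a j \<le> t then w t else 0) = 1 - (\<Sum>t<a j. w t)"
            using sum_tail[OF ajn] sumW by simp
          also have "\<dots> \<le> 1 - real (a j) / real n" using pref[OF ajn] by simp
          also have "\<dots> \<le> 1 - real j * p / real k"
          proof -
            have "real j * p * real n / real k / real n \<le> real (a j) / real n"
              using divide_right_mono[OF a_lo[of j], of "real n"] n0 by simp
            then show ?thesis using n0 by simp
          qed
          finally show ?thesis .
        qed
        then have "(\<Sum>j<k. \<Sum>t<n. if a j \<le> t then w t else 0) \<le> (\<Sum>j<k. 1 - real j * p / real k)"
          by (intro sum_mono) auto
        then show ?thesis using C0 sumW by (simp add: mult_left_mono)
      qed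
      also have "\<dots> = real n * p * (1 - (real k - 1) / (2 * real k) * p) + 1"
      proof -
        have "(\<Sum>j<k. 1 - real j * p / real k) = real k - p / real k * (\<Sum>j<k. real j)"
          by (simp add: sum_subtractf sum_distrib_left sum_divide_distrib algebra_simps)
        also have "\<dots> = real k - p * (real k - 1) / 2"
          using n0 by (simp add: gauss_real field_simps)
        finally have S: "(\<Sum>j<k. 1 - real j * p / real k) = real k - p * (real k - 1) / 2" .
        show ?thesis unfolding S C_def using n0 by (simp add: field_simps)
      qed
      finally show ?thesis .
    qed
  qed
qed

end
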